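(* Let $(R,\mathfrak m)$ be a Noetherian local ring of prime characteristic $p$ satisfying $(0:\mathfrak m^p)_R:=\{x\in R\mid \mathfrak m^p x=0\}\not\subseteq \mathfrak m^p$. Let $L_\bullet$ be a complex of finitely generated free $R$-modules whose differentials, written as matrices with respect to bases, have all entries in $\mathfrak m$. Then for every $r\ge 1$ and every integer $j$, $$H_j(L_\bullet\otimes_R {}^{\phi^r}\!R)=0 \iff L_j=0.$$
   Context: $\phi:R\to R$ denotes the Frobenius homomorphism $\phi(a)=a^p$. For $r\ge 1$, ${}^{\phi^r}\!R$ denotes the ring $R$ regarded as an $R$-module via $\phi^r$, i.e. $a\cdot b=a^{p^r}b$ for $a\in R$, $b\in {}^{\phi^r}\!R$. *)

theory Defs
  imports Main "HOL-Computational_Algebra.Primes"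
begin

definition is_ideal :: "'a::comm_ring_1 set \<Rightarrow> bool" where
  "is_ideal I \<longleftrightarrow> 0 \<in> I \<and> (\<forall>x\<in>I. \<forall>y\<in>I. x + y \<in> I) \<and> (\<forall>a. \<forall>x\<in>I. a * x \<in> I)"

definition ideal_span :: "'a::comm_ring_1 set \<Rightarrow> 'a set" where
  "ideal_span S = {\<Sum>x\<in>F. c x * x | F c. finite F \<and> F \<subseteq> S}"

definition maximal_ideal :: "'a::comm_ring_1 set \<Rightarrow> bool" where
  "maximal_ideal M \<longleftrightarrow> is_ideal M \<and> M \<noteq> UNIV \<and>
     (\<forall>J. is_ideal J \<and> M \<subseteq> J \<longrightarrow> J = M \<or> J = UNIV)"

definition noetherian_ring :: "'a::comm_ring_1 itself \<Rightarrow> bool" where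
  "noetherian_ring _ \<longleftrightarrow> (\<forall>I::'a set. is_ideal I \<longrightarrow> (\<exists>F. finite F \<and> I = ideal_span F))"

definition local_ring_with_max :: "'a::comm_ring_1 set \<Rightarrow> bool" where
  "local_ring_with_max m \<longleftrightarrow> maximal_ideal m \<and> (\<forall>M. maximal_ideal M \<longrightarrow> M = m)"

definition ideal_power :: "'a::comm_ring_1 set \<Rightarrow> nat \<Rightarrow> 'a set" where
  "ideal_power I k = ideal_span {prod_list xs | xs. length xs = k \<and> set xs \<subseteq> I}"

definition ann_ideal :: "'a::comm_ring_1 set \<Rightarrow> 'a set" where
  "ann_ideal J = {x. \<forall>y\<in>J. y * x = 0}"

(* A complex L of finitely generated free modules, given by bases:
   L_j = R^(rk j), differential d j : L_j \<rightarrow> L_(j-1) given by the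
   (rk (j-1)) x (rk j) matrix (i,k) \<mapsto> d j i k.  Entries outside the ranges are ignored. *)

definition vecs :: "nat \<Rightarrow> (nat \<Rightarrow> 'a::comm_ring_1) set" where
  "vecs n = {v. \<forall>i\<ge>n. v i = 0}"

definition is_free_complex :: "(int \<Rightarrow> nat) \<Rightarrow> (int \<Rightarrow> nat \<Rightarrow> nat \<Rightarrow> 'a::comm_ring_1) \<Rightarrow> bool" where
  "is_free_complex rk d \<longleftrightarrow>
     (\<forall>j i k. i < rk (j - 1) \<and> k < rk (j + 1) \<longrightarrow> (\<Sum>l<rk j. d j i l * d (j + 1) l k) = 0)"

definition homology_vanishes :: "(int \<Rightarrow> nat) \<Rightarrow> (int \<Rightarrow> nat \<Rightarrow> nat \<Rightarrow> 'a::comm_ring_1) \<Rightarrow> int \<Rightarrow> bool" where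
  "homology_vanishes rk d j \<longleftrightarrow>
     (\<forall>v\<in>vecs (rk j). (\<forall>i<rk (j - 1). (\<Sum>k<rk j. d j i k * v k) = 0) \<longrightarrow>
        (\<exists>w\<in>vecs (rk (j + 1)). \<forall>i<rk j. v i = (\<Sum>k<rk (j + 1). d (j + 1) i k * w k)))"

(* L \<otimes>_R ^{phi^r}R: with respect to the bases e \<otimes> 1, same ranks and
   differential matrices whose entries are raised to the p^r-th power. *)
definition frobenius_complex :: "nat \<Rightarrow> nat \<Rightarrow> (int \<Rightarrow> nat \<Rightarrow> nat \<Rightarrow> 'a::comm_ring_1) \<Rightarrow> (int \<Rightarrow> nat \<Rightarrow> nat \<Rightarrow> 'a)" where
  "frobenius_complex p r d = (\<lambda>j i k. d j i k ^ (p ^ r))"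

end

theory Submission
  imports Defs
begin

lemma span_0: "0 \<in> ideal_span S"
  unfolding ideal_span_def by (rule CollectI, rule exI[of _ "{}"]) auto

lemma span_gen: "s \<in> S \<Longrightarrow> s \<in> ideal_span S"
  unfolding ideal_span_def
  by (rule CollectI, rule exI[of _ "{s}"], rule exI[of _ "\<lambda>_. 1"]) auto

lemma span_mult: "a \<in> ideal_span S \<Longrightarrow> t * a \<in> ideal_span S"
proof -
  assume "a \<in> ideal_span S"
  then obtain F c where F: "finite F" "F \<subseteq> S" "a = (\<Sum>x\<in>F. c x * x)"
    unfolding ideal_span_def by blast
  have "t * a = (\<Sum>x\<in>F. (t * c x) * x)"
    using F(3) by (simp add: sum_distrib_left mult.assoc)
  then show ?thesis unfolding ideal_span_def using F(1,2)
    by (intro CollectI exI[of _ F] exI[of _ "\<lambda>x. t * c x"]) simp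
qed

lemma span_add: "a \<in> ideal_span S \<Longrightarrow> b \<in> ideal_span S \<Longrightarrow> a + b \<in> ideal_span S"
proof -
  assume "a \<in> ideal_span S" "b \<in> ideal_span S"
  then obtain F1 c1 F2 c2 where F: "finite F1" "F1 \<subseteq> S" "a = (\<Sum>x\<in>F1. c1 x * x)"
     "finite F2" "F2 \<subseteq> S" "b = (\<Sum>x\<in>F2. c2 x * x)"
    unfolding ideal_span_def by blast
  define c where "c x = (if x \<in> F1 then c1 x else 0) + (if x \<in> F2 then c2 x else 0)" for x
  have "(\<Sum>x\<in>F1 \<union> F2. c x * x) = (\<Sum>x\<in>F1 \<union> F2. (if x \<in> F1 then c1 x * x else 0))
     + (\<Sum>x\<in>F1 \<union> F2. (if x \<in> F2 then c2 x * x else 0))"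
  proof -
    have "c x * x = (if x \<in> F1 then c1 x * x else 0) + (if x \<in> F2 then c2 x * x else 0)" for x
      unfolding c_def by (simp add: distrib_right)
    then show ?thesis by (simp add: sum.distrib)
  qed
  also have "\<dots> = a + b"
    using F by (simp add: sum.If_cases Int_absorb1)
  finally have "a + b = (\<Sum>x\<in>F1 \<union> F2. c x * x)" by simp
  then show ?thesis unfolding ideal_span_def using F
    by (intro CollectI exI[of _ "F1 \<union> F2"] exI[of _ c]) simp
qed

lemma span_sum: "finite A \<Longrightarrow> (\<And>k. k \<in> A \<Longrightarrow> f k \<in> ideal_span S) \<Longrightarrow> sum f A \<in> ideal_span S"
  by (induction A rule: finite_induct) (auto intro: span_0 span_add)

lemma pow_in: "y \<in> m \<Longrightarrow> y ^ p \<in> ideal_power m p"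
  unfolding ideal_power_def
  by (rule span_gen, rule CollectI, rule exI[of _ "replicate p y"]) auto

theorem mainTheorem2:
  fixes m :: "'a::comm_ring_1 set"
    and p :: nat
    and rk :: "int \<Rightarrow> nat"
    and d :: "int \<Rightarrow> nat \<Rightarrow> nat \<Rightarrow> 'a"
    and r :: nat and j :: int
  assumes "noetherian_ring TYPE('a)"
    and "local_ring_with_max m"
    and "prime p" and "CHAR('a) = p"
    and "\<not> (ann_ideal (ideal_power m p) \<subseteq> ideal_power m p)"
    and "is_free_complex rk d"
    and "\<And>j i k. i < rk (j - 1) \<Longrightarrow> k < rk j \<Longrightarrow> d j i k \<in> m"
    and "r \<ge> 1"
  shows "homology_vanishes rk (frobenius_complex p r d) j \<longleftrightarrow> rk j = 0"
proof
  assume "rk j = 0"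
  then show "homology_vanishes rk (frobenius_complex p r d) j"
    unfolding homology_vanishes_def vecs_def
    by (auto intro!: bexI[of _ "\<lambda>_. 0"])
next
  assume HV: "homology_vanishes rk (frobenius_complex p r d) j"
  show "rk j = 0"
  proof (rule ccontr)
    assume "rk j \<noteq> 0"
    then have rj: "0 < rk j" by simp
    define q where "q = p ^ r"
    have "p \<ge> 1" using prime_gt_0_nat[OF assms(3)] by linarith
    have "p ^ 1 \<le> p ^ r" by (rule power_increasing[OF assms(8) \<open>p \<ge> 1\<close>])
    then obtain e where qp: "q = p + e" unfolding q_def by (auto dest: le_Suc_ex)
    have split: "y ^ q = y ^ e * y ^ p" for y :: 'a
      by (simp add: qp power_add mult.commute)
    obtain x where x: "x \<in> ann_ideal (ideal_power m p)" "x \<notin> ideal_power m p"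
      using assms(5) by blast
    have ann: "y \<in> m \<Longrightarrow> y ^ q * x = 0" for y
    proof -
      assume "y \<in> m"
      then have "y ^ p * x = 0" using x(1) pow_in unfolding ann_ideal_def by blast
      then show ?thesis by (simp add: split mult.assoc)
    qed
    define v where "v = (\<lambda>i::nat. if i = 0 then x else 0)"
    have vv: "v \<in> vecs (rk j)" unfolding v_def vecs_def using rj by auto
    have cyc: "\<forall>i<rk (j - 1). (\<Sum>k<rk j. frobenius_complex p r d j i k * v k) = 0"
    proof (intro allI impI)
      fix i assume i: "i < rk (j - 1)"
      have "(\<Sum>k<rk j. frobenius_complex p r d j i k * v k) = d j i 0 ^ q * x"
        using rj unfolding v_def frobenius_complex_def q_def
        by (simp add: if_distrib sum.delta cong: if_cong)
      also have "\<dots> = 0" using ann assms(7)[OF i rj] by blast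
      finally show "(\<Sum>k<rk j. frobenius_complex p r d j i k * v k) = 0" .
    qed
    have "\<exists>w\<in>vecs (rk (j + 1)). \<forall>i<rk j. v i = (\<Sum>k<rk (j + 1). frobenius_complex p r d (j + 1) i k * w k)"
    proof -
      have "((\<forall>i<rk (j - 1). (\<Sum>k<rk j. frobenius_complex p r d j i k * v k) = 0) \<longrightarrow>
        (\<exists>w\<in>vecs (rk (j + 1)). \<forall>i<rk j. v i = (\<Sum>k<rk (j + 1). frobenius_complex p r d (j + 1) i k * w k)))"
        by (rule bspec[OF HV[unfolded homology_vanishes_def] vv])
      then show ?thesis using cyc by (rule mp)
    qed
    then obtain w where w: "\<forall>i<rk j. v i = (\<Sum>k<rk (j + 1). frobenius_complex p r d (j + 1) i k * w k)"
      by blast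
    have v0s: "v 0 = (\<Sum>k<rk (j + 1). frobenius_complex p r d (j + 1) 0 k * w k)"
      using w rj by blast
    have v0x: "v 0 = x" unfolding v_def by simp
    have "x = (\<Sum>k<rk (j + 1). frobenius_complex p r d (j + 1) 0 k * w k)"
      by (rule trans[OF sym[OF v0x] v0s])
    also have "\<dots> \<in> ideal_power m p"
    proof (rule span_sum[where S="{prod_list xs | xs. length xs = p \<and> set xs \<subseteq> m}", folded ideal_power_def])
      fix k assume "k \<in> {..<rk (j + 1)}"
      then have "d (j + 1) 0 k \<in> m" using assms(7)[of 0 "j+1" k] rj by simp
      then have "d (j + 1) 0 k ^ p \<in> ideal_power m p" by (rule pow_in)
      then have "(w k * d (j + 1) 0 k ^ e) * d (j + 1) 0 k ^ p \<in> ideal_power m p"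
        unfolding ideal_power_def by (rule span_mult)
      then show "frobenius_complex p r d (j + 1) 0 k * w k \<in> ideal_power m p"
        unfolding frobenius_complex_def q_def[symmetric] split
        by (simp add: ac_simps)
    qed simp
    finally show False using x(2) by simp
  qed
qed

end
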